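(* Consider algorithm PredFL (defined in the context) on any instance of Online Facility Location with predictions. If $\eta_1=0$, i.e., every prediction $\hat f_x$ coincides with the facility $c^*_x$ to which $x$ is assigned in a fixed optimal offline solution, then the expected cost of PredFL is at most $2\cdot\mathrm{OPT}$; that is, PredFL is $2$-competitive.
   Context: Online Facility Location (OFL): a metric space $(\mathcal M,d)$ and a uniform facility opening cost $f>0$. Demands $x\in\mathcal M$ arrive one by one; each must be connected upon arrival to an open facility, paying its distance; opened facilities cost $f$ each and cannot be closed. The cost is $f\cdot|\mathcal F|+\sum_x\min_{y\in\mathcal F}d(x,y)$, $\mathcal F$ the set of opened facilities; $\mathrm{OPT}$ denotes the optimal offline cost. Fix an optimal offline solution; for each demand $x$, $c^*_x$ denotes the optimal facility $x$ is connected to. With each demand $x$ the algorithm also receives a prediction $\hat f_x\in\mathcal M$. The error of $x$ is $\eta_x=d(\hat f_x,c^*_x)$, $\eta_1=\sum_x\eta_x$, $\eta_\infty=\max_x\eta_x$. Algorithm PredFL: maintain the set $\mathcal O$ of open facilities, initially empty. When demand $x$ with prediction $\hat f_x$ arrives, let $f_{open}=\arg\min_{j\in\mathcal O}d(x,j)$. If $d(x,\hat f_x)>f$, open a facility at $x$ (add to $\mathcal O$). Otherwise let $r_x=d(f_{open},\hat f_x)$ (with $r_x=\infty$ if $\mathcal O=\emptyset$) and open a facility at $\hat f_x$ with probability $\min\{1,r_x/f\}$ (adding it to $\mathcal O$ on success). The demand $x$ is then connected to its nearest open facility. *)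

theory Defs
  imports "HOL-Probability.Probability"
begin

text \<open>An instance is a list of (demand, prediction) pairs, in arrival order.\<close>

definition ofl_valid :: "'a list \<Rightarrow> 'a set \<Rightarrow> (nat \<Rightarrow> 'a) \<Rightarrow> bool" where
  "ofl_valid xs F \<sigma> \<longleftrightarrow> finite F \<and> (\<forall>i<length xs. \<sigma> i \<in> F)"

definition ofl_cost :: "real \<Rightarrow> 'a::metric_space list \<Rightarrow> 'a set \<Rightarrow> (nat \<Rightarrow> 'a) \<Rightarrow> real" where
  "ofl_cost f xs F \<sigma> = f * real (card F) + (\<Sum>i<length xs. dist (xs ! i) (\<sigma> i))"

definition ofl_OPT :: "real \<Rightarrow> 'a::metric_space list \<Rightarrow> real" where
  "ofl_OPT f xs = (INF p \<in> {(F, \<sigma>). ofl_valid xs F \<sigma>}. ofl_cost f xs (fst p) (snd p))"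

definition ofl_optimal :: "real \<Rightarrow> 'a::metric_space list \<Rightarrow> 'a set \<Rightarrow> (nat \<Rightarrow> 'a) \<Rightarrow> bool" where
  "ofl_optimal f xs F \<sigma> \<longleftrightarrow> ofl_valid xs F \<sigma> \<and>
     (\<forall>F' \<sigma>'. ofl_valid xs F' \<sigma>' \<longrightarrow> ofl_cost f xs F \<sigma> \<le> ofl_cost f xs F' \<sigma>')"

text \<open>Prediction error eta_1 w.r.t. the fixed optimal assignment cstar (c^*_x of the i-th demand).\<close>

definition eta1 :: "('a::metric_space \<times> 'a) list \<Rightarrow> (nat \<Rightarrow> 'a) \<Rightarrow> real" where
  "eta1 D cstar = (\<Sum>i<length D. dist (snd (D ! i)) (cstar i))"

definition nearest_rule :: "('a set \<Rightarrow> 'a \<Rightarrow> 'a::metric_space) \<Rightarrow> bool" where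
  "nearest_rule tb \<longleftrightarrow> (\<forall>S x. finite S \<and> S \<noteq> {} \<longrightarrow>
      tb S x \<in> S \<and> (\<forall>j\<in>S. dist x (tb S x) \<le> dist x j))"

text \<open>State: (set of open facilities, accumulated connection cost).\<close>

definition predfl_open :: "real \<Rightarrow> ('a set \<Rightarrow> 'a \<Rightarrow> 'a::metric_space) \<Rightarrow> 'a \<Rightarrow> 'a \<Rightarrow> 'a set \<Rightarrow> 'a set pmf" where
  "predfl_open f tb x p S =
     (if dist x p > f then return_pmf (insert x S)
      else if S = {} then return_pmf (insert p S)
      else map_pmf (\<lambda>b. if b then insert p S else S)
             (bernoulli_pmf (min 1 (dist (tb S x) p / f))))"

definition predfl_step :: "real \<Rightarrow> ('a set \<Rightarrow> 'a \<Rightarrow> 'a::metric_space) \<Rightarrow> 'a \<times> 'a \<Rightarrow> 'a set \<times> real \<Rightarrow> ('a set \<times> real) pmf" where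
  "predfl_step f tb d s =
     map_pmf (\<lambda>S'. (S', snd s + infdist (fst d) S')) (predfl_open f tb (fst d) (snd d) (fst s))"

fun predfl_run :: "real \<Rightarrow> ('a set \<Rightarrow> 'a \<Rightarrow> 'a::metric_space) \<Rightarrow> ('a \<times> 'a) list \<Rightarrow> 'a set \<times> real \<Rightarrow> ('a set \<times> real) pmf" where
  "predfl_run f tb [] s = return_pmf s"
| "predfl_run f tb (d # ds) s = bind_pmf (predfl_step f tb d s) (predfl_run f tb ds)"

definition predfl_expected_cost :: "real \<Rightarrow> ('a set \<Rightarrow> 'a \<Rightarrow> 'a::metric_space) \<Rightarrow> ('a \<times> 'a) list \<Rightarrow> real" where
  "predfl_expected_cost f tb D =
     measure_pmf.expectation (predfl_run f tb D ({}, 0)) (\<lambda>s. f * real (card (fst s)) + snd s)"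

end

theory Submission imports Defs begin

lemma exp_bind:
  fixes h :: "'b \<Rightarrow> real"
  assumes "finite (set_pmf p)" "\<And>x. x \<in> set_pmf p \<Longrightarrow> finite (set_pmf (q x))"
  shows "measure_pmf.expectation (bind_pmf p q) h =
         measure_pmf.expectation p (\<lambda>x. measure_pmf.expectation (q x) h)"
proof -
  have "measure_pmf.expectation (bind_pmf p q) h =
     (\<Sum>a\<in>set_pmf p. pmf p a *\<^sub>R measure_pmf.expectation (q a) h)"
    using assms by (intro pmf_expectation_bind) auto
  also have "\<dots> = measure_pmf.expectation p (\<lambda>x. measure_pmf.expectation (q x) h)"
    using assms by (subst integral_measure_pmf[of "set_pmf p"]) auto
  finally show ?thesis .
qed

lemma fin_open: "finite (set_pmf (predfl_open f tb x p S))"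
  unfolding predfl_open_def by (auto intro!: finite_imageI)

lemma fin_step: "finite (set_pmf (predfl_step f tb d s))"
  unfolding predfl_step_def by (simp add: fin_open)

lemma fin_run: "finite (set_pmf (predfl_run f tb ds s))"
proof (induction ds arbitrary: s)
  case Nil then show ?case by simp
next
  case (Cons d ds) then show ?case by (simp add: fin_step)
qed

definition EE where
  "EE f tb ds S a = measure_pmf.expectation (predfl_run f tb ds (S, a))
      (\<lambda>s. f * real (card (fst s)) + snd s)"

lemma EE_Cons: "EE f tb ((x,c) # ds) S a =
  measure_pmf.expectation (predfl_open f tb x c S) (\<lambda>S'. EE f tb ds S' (a + infdist x S'))"
  unfolding EE_def predfl_run.simps
  apply (subst exp_bind[OF fin_step])
   apply (simp add: fin_run)
  apply (simp add: predfl_step_def)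
  done

lemma open_fin: "S' \<in> set_pmf (predfl_open f tb x c S) \<Longrightarrow> finite S \<Longrightarrow> finite S'"
  unfolding predfl_open_def by (auto split: if_splits)

lemma main:
  fixes f :: real and tb :: "'a set \<Rightarrow> 'a \<Rightarrow> 'a::metric_space"
  assumes f: "f > 0" and tb: "\<And>S x. finite S \<Longrightarrow> S \<noteq> {} \<Longrightarrow> tb S x \<in> S"
  shows "finite S \<Longrightarrow> EE f tb ds S a \<le> f * real (card S) + a
     + sum_list (map (\<lambda>d. dist (fst d) (snd d)) ds) + 2 * f * real (card (set (map snd ds) - S))"
proof (induction ds arbitrary: S a)
  case Nil
  then show ?case by (simp add: EE_def)
next
  case (Cons d ds)
  obtain x c where d: "d = (x,c)" by fastforce
  define R where "R = sum_list (map (\<lambda>d. dist (fst d) (snd d)) ds)"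
  define A where "A = set (map snd ds)"
  have finA: "finite A" unfolding A_def by simp
  define K where "K = card (insert c A - S)"
  have goal: "?case \<longleftrightarrow> EE f tb ((x,c) # ds) S a \<le> f * real (card S) + a + dist x c + R
      + 2 * f * real K"
    by (simp add: d R_def A_def K_def algebra_simps)
  have IH: "\<And>S a. finite S \<Longrightarrow> EE f tb ds S a \<le> f * real (card S) + a + R
       + 2 * f * real (card (A - S))"
    using Cons.IH unfolding R_def A_def by blast
  have KA: "card (A - S') \<le> K" if "S \<subseteq> S'" for S'
    unfolding K_def using finA that by (intro card_mono) auto
  have MG: "EE f tb ((x,c) # ds) S a \<le> f * real (card S) + a + dist x c + R
      + 2 * f * real K"
  proof (cases "dist x c > f")
    case True
    have "EE f tb ((x,c) # ds) S a = EE f tb ds (insert x S) a"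
      by (simp add: EE_Cons predfl_open_def True)
    also have "\<dots> \<le> f * real (card (insert x S)) + a + R + 2 * f * real (card (A - insert x S))"
      using IH Cons.prems by simp
    also have "\<dots> \<le> f * (real (card S) + 1) + a + R + 2 * f * real K"
    proof -
      have "card (insert x S) \<le> card S + 1" by (simp add: card_insert_le_m1 card_insert_if)
      hence "f * real (card (insert x S)) \<le> f * (real (card S) + 1)" using f by simp
      moreover have "real (card (A - insert x S)) \<le> real K" using KA[of "insert x S"] by auto
      ultimately have "2 * f * real (card (A - insert x S)) \<le> 2 * f * real K"
        "f * real (card (insert x S)) \<le> f * (real (card S) + 1)"
        using f by (auto intro: mult_left_mono)
      then show ?thesis by linarith
    qed
    also have "\<dots> \<le> f * real (card S) + a + dist x c + R + 2 * f * real K"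
      using True by (simp add: algebra_simps)
    finally show ?thesis .
  next
    case False
    note nf = False
    show ?thesis
    proof (cases "S = {}")
      case True
      have "EE f tb ((x,c) # ds) S a = EE f tb ds {c} (a + dist x c)"
        using nf True by (simp add: EE_Cons predfl_open_def infdist_singleton)
      also have "\<dots> \<le> f + (a + dist x c) + R + 2 * f * real (card (A - {c}))"
        using IH[of "{c}" "a + dist x c"] by simp
      also have "\<dots> \<le> f * real (card S) + a + dist x c + R + 2 * f * real K"
      proof -
        have "K = card (A - {c}) + 1" unfolding K_def using True finA by (simp add: card.insert_remove)
        thus ?thesis using True f by (simp add: algebra_simps)
      qed
      finally show ?thesis .
    next
      case ne: False
      define j where "j = tb S x"
      have jS: "j \<in> S" unfolding j_def using tb Cons.prems ne by blast
      define r where "r = dist j c"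
      define p where "p = min 1 (r / f)"
      have p0: "0 \<le> p" and p1: "p \<le> 1" unfolding p_def r_def using f by auto
      have rp: "(1 - p) * r \<le> p * f"
      proof (cases "r / f \<ge> 1")
        case True then have "p = 1" unfolding p_def by simp
        then show ?thesis using f by simp
      next
        case False then have "p = r / f" unfolding p_def by simp
        then have "p * f = r" using f by simp
        moreover have "r \<ge> 0" unfolding r_def by simp
        ultimately show ?thesis using p0 mult_nonneg_nonneg[of p r] by (simp add: algebra_simps)
      qed
      define E1 where "E1 = EE f tb ds (insert c S) (a + infdist x (insert c S))"
      define E0 where "E0 = EE f tb ds S (a + infdist x S)"
      have eq: "EE f tb ((x,c) # ds) S a = E1 * p + E0 * (1 - p)"
        using nf ne p0 p1 unfolding E1_def E0_def p_def r_def j_def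
        by (simp add: EE_Cons predfl_open_def)
      have i0: "infdist x S \<le> dist x c + r"
      proof -
        have "infdist x S \<le> dist x j" using jS by (rule infdist_le)
        also have "\<dots> \<le> dist x c + dist j c" using dist_triangle[of x j c] by (simp add: dist_commute)
        finally show ?thesis unfolding r_def .
      qed
      have i1: "infdist x (insert c S) \<le> dist x c" by (rule infdist_le) simp
      let ?Q = "f * real (card S) + a + dist x c + R + 2 * f * real K"
      show ?thesis
      proof (cases "c \<in> S")
        case True
        then have "E1 = E0" unfolding E1_def E0_def by (simp add: insert_absorb)
        then have "EE f tb ((x,c) # ds) S a = E0" using eq by (simp add: algebra_simps)
        also have "\<dots> \<le> f * real (card S) + (a + infdist x S) + R + 2 * f * real (card (A - S))"
          unfolding E0_def using IH Cons.prems by blast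
        also have "\<dots> \<le> ?Q"
        proof -
          have "infdist x S \<le> dist x c" using True by (rule infdist_le)
          moreover have "real (card (A - S)) \<le> real K" using KA[of S] by auto
          moreover have "2 * f * real (card (A - S)) \<le> 2 * f * real K"
            using f KA[of S] by (auto intro: mult_left_mono)
          ultimately show ?thesis by linarith
        qed
        finally show ?thesis .
      next
        case cS: False
        have K1: "K = card (A - insert c S) + 1"
        proof -
          have "insert c A - S = insert c (A - insert c S)" using cS by auto
          thus ?thesis unfolding K_def using finA by simp
        qed
        have b1: "E1 \<le> ?Q - f"
        proof -
          have "E1 \<le> f * real (card (insert c S)) + (a + infdist x (insert c S)) + R
               + 2 * f * real (card (A - insert c S))"
            unfolding E1_def using IH Cons.prems by blast
          also have "\<dots> \<le> ?Q - f"
            using i1 K1 cS Cons.prems by (simp add: algebra_simps)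
          finally show ?thesis .
        qed
        have b0: "E0 \<le> ?Q + r"
        proof -
          have "E0 \<le> f * real (card S) + (a + infdist x S) + R + 2 * f * real (card (A - S))"
            unfolding E0_def using IH Cons.prems by blast
          also have "\<dots> \<le> ?Q + r"
          proof -
            have "real (card (A - S)) \<le> real K" using KA[of S] by auto
            then have "2 * f * real (card (A - S)) \<le> 2 * f * real K"
              using f by (auto intro: mult_left_mono)
            then show ?thesis using i0 by linarith
          qed
          finally show ?thesis .
        qed
        have "E1 * p + E0 * (1 - p) \<le> (?Q - f) * p + (?Q + r) * (1 - p)"
          using b1 b0 p0 p1 by (intro add_mono mult_right_mono) auto
        also have "\<dots> = ?Q - p * f + (1 - p) * r" by (simp add: algebra_simps)
        also have "\<dots> \<le> ?Q" using rp by simp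
        finally show ?thesis using eq by simp
      qed
    qed
  qed
  show ?case using MG goal by blast
qed

theorem theorem3p1:
  fixes f :: real and D :: "('a::metric_space \<times> 'a) list"
    and tb :: "'a set \<Rightarrow> 'a \<Rightarrow> 'a" and Fstar :: "'a set" and cstar :: "nat \<Rightarrow> 'a"
  assumes "f > 0"
    and "nearest_rule tb"
    and "ofl_optimal f (map fst D) Fstar cstar"
    and "eta1 D cstar = 0"
  shows "predfl_expected_cost f tb D \<le> 2 * ofl_OPT f (map fst D)"
proof -
  have tb: "\<And>S x. finite S \<Longrightarrow> S \<noteq> {} \<Longrightarrow> tb S x \<in> S"
    using assms(2) unfolding nearest_rule_def by blast
  have val: "ofl_valid (map fst D) Fstar cstar" and
    opt: "\<And>F' \<sigma>'. ofl_valid (map fst D) F' \<sigma>' \<Longrightarrow>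
       ofl_cost f (map fst D) Fstar cstar \<le> ofl_cost f (map fst D) F' \<sigma>'"
    using assms(3) unfolding ofl_optimal_def by blast+
  have finF: "finite Fstar" and inF: "\<And>i. i < length D \<Longrightarrow> cstar i \<in> Fstar"
    using val unfolding ofl_valid_def by auto
  have z: "\<forall>i\<in>{..<length D}. dist (snd (D ! i)) (cstar i) = 0"
    using assms(4) unfolding eta1_def
    using sum_nonneg_eq_0_iff[of "{..<length D}" "\<lambda>i. dist (snd (D ! i)) (cstar i)"] by simp
  have sn: "\<And>i. i < length D \<Longrightarrow> snd (D ! i) = cstar i" using z by auto
  have sub: "set (map snd D) \<subseteq> Fstar"
  proof
    fix y assume "y \<in> set (map snd D)"
    then obtain i where "i < length D" "y = snd (D ! i)"
      by (auto simp: in_set_conv_nth)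
    then show "y \<in> Fstar" using sn inF by auto
  qed
  define Sd where "Sd = (\<Sum>i<length (map fst D). dist (map fst D ! i) (cstar i))"
  have Sd0: "Sd \<ge> 0" unfolding Sd_def by (intro sum_nonneg) auto
  have sl: "sum_list (map (\<lambda>d. dist (fst d) (snd d)) D) = Sd"
    unfolding Sd_def sum_list_sum_nth atLeast0LessThan using sn
    by (intro sum.cong) auto
  have "predfl_expected_cost f tb D = EE f tb D {} 0"
    unfolding predfl_expected_cost_def EE_def by simp
  also have "\<dots> \<le> f * real (card ({}::'a set)) + 0 + sum_list (map (\<lambda>d. dist (fst d) (snd d)) D)
      + 2 * f * real (card (set (map snd D) - {}))"
    using main[OF assms(1) tb, where S="{}" and ds=D and a=0] by simp
  also have "\<dots> \<le> Sd + 2 * f * real (card Fstar)"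
  proof -
    have "card (set (map snd D)) \<le> card Fstar" using sub finF by (rule card_mono[rotated])
    then have "2 * f * real (card (set (map snd D))) \<le> 2 * f * real (card Fstar)"
      using assms(1) by (auto intro: mult_left_mono)
    then show ?thesis using sl by simp
  qed
  also have "\<dots> \<le> 2 * ofl_cost f (map fst D) Fstar cstar"
    unfolding ofl_cost_def Sd_def[symmetric] using Sd0 by simp
  finally have c1: "predfl_expected_cost f tb D \<le> 2 * ofl_cost f (map fst D) Fstar cstar" .
  have c2: "ofl_cost f (map fst D) Fstar cstar \<le> ofl_OPT f (map fst D)"
    unfolding ofl_OPT_def
  proof (rule cINF_greatest)
    show "{(F, \<sigma>). ofl_valid (map fst D) F \<sigma>} \<noteq> {}" using val by auto
  next
    fix p assume "p \<in> {(F, \<sigma>). ofl_valid (map fst D) F \<sigma>}"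
    then show "ofl_cost f (map fst D) Fstar cstar \<le> ofl_cost f (map fst D) (fst p) (snd p)"
      using opt by (cases p) auto
  qed
  show ?thesis using c1 c2 by linarith
qed

end
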